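(* Let $1<\beta\le2$. For Lebesgue-almost every $x\in[0,1]$, the function $G_\beta$ is not pointwise Lipschitz continuous at $x$; that is, there is no constant $K>0$ such that $|G_\beta(y)-G_\beta(x)|\le K|y-x|$ for all $y\in[0,1]$.
   Context: Fix $1<\beta\le 2$. The beta-map is $\tau_\beta:[0,1]\to[0,1]$, $\tau_\beta(x)=\beta x-[\beta x]$, where $[y]$ is the integer part of $y$. Let $m_\beta$ be the unique $\tau_\beta$-invariant Borel probability measure absolutely continuous with respect to Lebesgue measure. For $x\in[0,1]$ and $n\ge1$ the digits are $g_n(x)=[\beta\,\tau_\beta^{n-1}(x)]$, so that $x=\sum_{n\ge1}g_n(x)\beta^{-n}$ (greedy $\beta$-expansion). Put $M_\beta=m_\beta([1/\beta,1])=\int_0^1 g_1\,dm_\beta$. The generalized Takagi function is \[ G_\beta(x)=\frac{g_1(x)}{\beta}+\sum_{n=2}^\infty\frac{g_n(x)}{\beta^n}\Bigl(n-\frac{1}{M_\beta}\sum_{i=1}^{n-1}g_i(x)\Bigr),\qquad x\in[0,1]. \] *)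

theory Defs
  imports "HOL-Probability.Probability"
begin

definition beta_map :: "real \<Rightarrow> real \<Rightarrow> real" where
  "beta_map \<beta> x = \<beta> * x - of_int \<lfloor>\<beta> * x\<rfloor>"

definition beta_digit :: "real \<Rightarrow> nat \<Rightarrow> real \<Rightarrow> real" where
  "beta_digit \<beta> n x = of_int \<lfloor>\<beta> * (beta_map \<beta> ^^ (n - 1)) x\<rfloor>"

definition is_beta_acim :: "real \<Rightarrow> real measure \<Rightarrow> bool" where
  "is_beta_acim \<beta> m \<longleftrightarrow>
     sets m = sets (restrict_space borel {0..1}) \<and>
     prob_space m \<and>
     beta_map \<beta> \<in> measurable m m \<and>
     distr m m (beta_map \<beta>) = m \<and>
     absolutely_continuous (restrict_space lborel {0..1}) m"

definition beta_acim :: "real \<Rightarrow> real measure" where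
  "beta_acim \<beta> = (THE m. is_beta_acim \<beta> m)"

definition beta_M :: "real \<Rightarrow> real" where
  "beta_M \<beta> = measure (beta_acim \<beta>) {1/\<beta>..1}"

definition takagi_G :: "real \<Rightarrow> real \<Rightarrow> real" where
  "takagi_G \<beta> x = beta_digit \<beta> 1 x / \<beta> +
     (\<Sum>k. let n = k + 2 in
        beta_digit \<beta> n x / \<beta> ^ n *
        (real n - (1 / beta_M \<beta>) * (\<Sum>i=1..n-1. beta_digit \<beta> i x)))"

end

theory Submission
  imports Defs
begin


lemma affine_pre:
  fixes c t :: real
  assumes A: "A \<in> sets borel" and c: "c \<noteq> 0"
  shows "emeasure lborel A = ennreal \<bar>c\<bar> * emeasure lborel ((\<lambda>x. t + c*x) -` A)"
proof -
  have eq: "lborel = density (distr lborel borel (\<lambda>x. t + c * x)) (\<lambda>_. ennreal (abs c))"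
    using lborel_real_affine[OF c, of t] .
  have "emeasure lborel A = emeasure (density (distr lborel borel (\<lambda>x. t + c * x)) (\<lambda>_. ennreal (abs c))) A"
    using arg_cong[OF eq, of "\<lambda>M. emeasure M A"] .
  also have "\<dots> = (\<integral>\<^sup>+ x. ennreal \<bar>c\<bar> * indicator A x \<partial>distr lborel borel (\<lambda>x. t + c * x))"
    using A by (subst emeasure_density) auto
  also have "\<dots> = ennreal \<bar>c\<bar> * emeasure (distr lborel borel (\<lambda>x. t + c * x)) A"
    using A by (subst nn_integral_cmult_indicator) auto
  also have "\<dots> = ennreal \<bar>c\<bar> * emeasure lborel ((\<lambda>x. t + c*x) -` A)"
    using A by (subst emeasure_distr) auto
  finally show ?thesis .
qed

lemma affine_pre_measure:
  fixes c t :: real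
  assumes A: "A \<in> sets borel" and c: "c \<noteq> 0"
  shows "measure lborel ((\<lambda>x. t + c*x) -` A) = measure lborel A / \<bar>c\<bar>"
proof -
  have "measure lborel A = \<bar>c\<bar> * measure lborel ((\<lambda>x. t + c*x) -` A)"
    unfolding measure_def using affine_pre[OF A c, of t]
    by (simp add: enn2real_mult)
  then show ?thesis using c by simp
qed

lemma summable_n_pow:
  fixes r :: real assumes "0 \<le> r" "r < 1"
  shows "summable (\<lambda>n. real (Suc n) * r ^ Suc n)"
proof -
  have "summable (\<lambda>n. r^n * real n)"
    using geometric_sums_times_n[of r] assms sums_summable by auto
  then have "summable (\<lambda>n. r^(Suc n) * real (Suc n))"
    using summable_Suc_iff[of "\<lambda>n. r^n * real n"] by simp
  then show ?thesis by (simp add: mult.commute)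
qed



definition dig :: "real \<Rightarrow> real \<Rightarrow> int" where "dig b x = \<lfloor>b * x\<rfloor>"

lemma bm_eq: "beta_map b x = b * x - of_int (dig b x)"
  by (simp add: beta_map_def dig_def)

lemma bm_ge0: "0 \<le> beta_map b x" and bm_lt1: "beta_map b x < 1"
  unfolding beta_map_def by (simp_all add: floor_le_iff) linarith

lemma funpow_Suc': "(f ^^ Suc n) x = (f ^^ n) (f x)"
  by (simp add: funpow_Suc_right del: funpow.simps)

lemma iter_ge0: "0 \<le> x \<Longrightarrow> 0 \<le> (beta_map b ^^ n) x"
  by (cases n) (auto simp: bm_ge0)
lemma iter_lt1: "x < 1 \<Longrightarrow> (beta_map b ^^ n) x < 1"
  by (cases n) (auto simp: bm_lt1)

locale bx =
  fixes b :: real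
  assumes b1: "1 < b" and b2: "b \<le> 2"
begin

lemma dig01: "0 \<le> x \<Longrightarrow> x < 1 \<Longrightarrow> dig b x = 0 \<or> dig b x = 1"
proof -
  assume a: "0 \<le> x" "x < 1"
  have "b * x < b" using mult_strict_left_mono[of x 1 b] b1 a by simp
  moreover have "0 \<le> b * x" using b1 a by simp
  ultimately have "0 \<le> b * x" "b * x < 2" using b2 by linarith+
  then show ?thesis unfolding dig_def by linarith
qed

lemma dig0: "0 \<le> x \<Longrightarrow> b * x < 1 \<Longrightarrow> dig b x = 0"
  using b1 unfolding dig_def by (simp add: floor_eq_iff)

lemma dig1: "x < 1 \<Longrightarrow> 1 \<le> b * x \<Longrightarrow> dig b x = 1"
proof -
  assume "x < 1" "1 \<le> b * x"
  moreover have "b * x < b" using mult_strict_left_mono[of x 1 b] b1 \<open>x < 1\<close> by simp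
  ultimately have "b * x < 2" using b1 b2 by linarith
  then show ?thesis using \<open>1 \<le> b*x\<close> unfolding dig_def by (simp add: floor_eq_iff)
qed

lemma dig_ge0: "0 \<le> x \<Longrightarrow> x < 1 \<Longrightarrow> 0 \<le> dig b x" using dig01 by fastforce
lemma dig_le1: "0 \<le> x \<Longrightarrow> x < 1 \<Longrightarrow> dig b x \<le> 1" using dig01 by fastforce

lemma bdig: "beta_digit b (Suc n) x = of_int (dig b ((beta_map b ^^ n) x))"
  by (simp add: beta_digit_def dig_def)

definition Dsum :: "real \<Rightarrow> nat \<Rightarrow> real" where
  "Dsum x n = (\<Sum>i<n. of_int (dig b ((beta_map b ^^ i) x)))"

definition cc :: real where "cc = 1 / beta_M b"

definition W :: "real \<Rightarrow> nat \<Rightarrow> real" where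
  "W x n = real n - cc * Dsum x n"

definition ff :: "real \<Rightarrow> nat \<Rightarrow> real" where
  "ff x n = of_int (dig b ((beta_map b ^^ n) x)) / b ^ Suc n * (real (Suc n) - cc * Dsum x n)"

lemma Dsum_alt: "(\<Sum>i=1..n. beta_digit b i x) = Dsum x n"
  unfolding Dsum_def by (simp add: sum.atLeast1_atMost_eq bdig)

lemma Dsum_bounds: "0 \<le> x \<Longrightarrow> x < 1 \<Longrightarrow> 0 \<le> Dsum x n \<and> Dsum x n \<le> real n"
proof -
  assume x: "0 \<le> x" "x < 1"
  have h: "(0::real) \<le> of_int (dig b ((beta_map b ^^ i) x)) \<and> of_int (dig b ((beta_map b ^^ i) x)) \<le> (1::real)" for i
    using dig_ge0[OF iter_ge0[OF x(1)] iter_lt1[OF x(2)]] dig_le1[OF iter_ge0[OF x(1)] iter_lt1[OF x(2)]]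
    by (metis of_int_0_le_iff of_int_le_1_iff)
  have "0 \<le> Dsum x n" unfolding Dsum_def using h by (simp add: sum_nonneg)
  moreover have "Dsum x n \<le> (\<Sum>i<n. 1)" unfolding Dsum_def using h by (intro sum_mono) auto
  ultimately show ?thesis by simp
qed

lemma Dsum_Suc_shift: "Dsum x (Suc n) = of_int (dig b x) + Dsum (beta_map b x) n"
  unfolding Dsum_def by (subst sum.lessThan_Suc_shift) (simp add: funpow_Suc' del: funpow.simps sum.lessThan_Suc)

lemma Dsum_Suc: "Dsum x (Suc n) = Dsum x n + of_int (dig b ((beta_map b ^^ n) x))"
  unfolding Dsum_def by simp

lemma W_Suc_shift: "W x (Suc n) = W (beta_map b x) n + 1 - cc * of_int (dig b x)"
  unfolding W_def Dsum_Suc_shift by (simp add: algebra_simps)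

lemma W_Suc: "W x (Suc n) = W x n + 1 - cc * of_int (dig b ((beta_map b ^^ n) x))"
  unfolding W_def Dsum_Suc by (simp add: algebra_simps)

lemma ff_summable:
  assumes x: "0 \<le> x" "x < 1"
  shows "summable (ff x)"
proof -
  have sg: "summable (\<lambda>n. (1 + \<bar>cc\<bar>) * (real (Suc n) * (1/b) ^ Suc n))"
    using summable_n_pow[of "1/b"] b1 by (intro summable_mult) auto
  have bnd: "norm (ff x n) \<le> (1 + \<bar>cc\<bar>) * (real (Suc n) * (1/b) ^ Suc n)" for n
  proof -
  have d: "(0::real) \<le> of_int (dig b ((beta_map b ^^ n) x)) \<and> of_int (dig b ((beta_map b ^^ n) x)) \<le> (1::real)"
    using dig_ge0[OF iter_ge0[OF x(1)] iter_lt1[OF x(2)]] dig_le1[OF iter_ge0[OF x(1)] iter_lt1[OF x(2)]]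
    by (metis of_int_0_le_iff of_int_le_1_iff)
  have D: "0 \<le> Dsum x n" "Dsum x n \<le> real n" using Dsum_bounds[OF x] by auto
  have "\<bar>real (Suc n) - cc * Dsum x n\<bar> \<le> real (Suc n) + \<bar>cc\<bar> * Dsum x n"
  proof -
    have "\<bar>real (Suc n) - cc * Dsum x n\<bar> \<le> \<bar>real (Suc n)\<bar> + \<bar>cc * Dsum x n\<bar>"
      by (rule abs_triangle_ineq4)
    also have "\<dots> = real (Suc n) + \<bar>cc\<bar> * Dsum x n" using D by (simp add: abs_mult)
    finally show ?thesis .
  qed
  also have "\<dots> \<le> (1 + \<bar>cc\<bar>) * real (Suc n)"
    using D mult_left_mono[OF D(2), of "\<bar>cc\<bar>"] by (simp add: algebra_simps)
  finally have A: "\<bar>real (Suc n) - cc * Dsum x n\<bar> \<le> (1 + \<bar>cc\<bar>) * real (Suc n)" .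
  have "norm (ff x n) = \<bar>of_int (dig b ((beta_map b ^^ n) x))\<bar> / b ^ Suc n * \<bar>real (Suc n) - cc * Dsum x n\<bar>"
    unfolding ff_def using b1 by (simp add: abs_mult)
  also have "\<dots> \<le> 1 / b ^ Suc n * ((1 + \<bar>cc\<bar>) * real (Suc n))"
    using d A b1 by (intro mult_mono divide_right_mono) auto
  also have "\<dots> = (1 + \<bar>cc\<bar>) * (real (Suc n) * (1/b) ^ Suc n)"
    by (simp add: power_divide)
  finally show "norm (ff x n) \<le> (1 + \<bar>cc\<bar>) * (real (Suc n) * (1/b) ^ Suc n)" .
  qed
  show ?thesis using summable_comparison_test'[OF sg bnd] .
qed

end

context bx begin
lemma G_eq:
  assumes x: "0 \<le> x" "x < 1"
  shows "takagi_G b x = suminf (ff x)"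
proof -
  have t: "(let n = k + 2 in beta_digit b n x / b ^ n *
        (real n - (1 / beta_M b) * (\<Sum>i=1..n-1. beta_digit b i x))) = ff x (Suc k)" for k
  proof -
    have "k + 2 = Suc (Suc k)" "k + 2 - 1 = Suc k" by auto
    then show ?thesis unfolding Let_def ff_def cc_def[symmetric]
      by (simp only: bdig Dsum_alt)
  qed
  have h0: "beta_digit b 1 x / b = ff x 0"
    unfolding ff_def Dsum_def using bdig[of 0 x] by simp
  have "takagi_G b x = ff x 0 + (\<Sum>k. ff x (Suc k))"
    unfolding takagi_G_def t h0 by simp
  also have "\<dots> = suminf (ff x)"
    using suminf_split_head[OF ff_summable[OF x]] by simp
  finally show ?thesis .
qed


lemma partial_exp:
  "(\<Sum>n<N. of_int (dig b ((beta_map b ^^ n) z)) / b ^ Suc n) = z - (beta_map b ^^ N) z / b ^ N"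
proof (induction N)
  case 0 then show ?case by simp
next
  case (Suc N)
  let ?t = "(beta_map b ^^ N) z" and ?d = "of_int (dig b ((beta_map b ^^ N) z)) :: real"
  have "(beta_map b ^^ Suc N) z = b * ?t - ?d"
    by (simp add: bm_eq)
  then have e: "(beta_map b ^^ Suc N) z / b ^ Suc N = ?t / b ^ N - ?d / b ^ Suc N"
    using b1 by (simp add: diff_divide_distrib)
  show ?case unfolding e sum.lessThan_Suc Suc.IH by simp
qed

lemma exp_sums:
  assumes z: "0 \<le> z" "z < 1"
  shows "(\<lambda>n. of_int (dig b ((beta_map b ^^ n) z)) / b ^ Suc n) sums z"
proof -
  have lim0: "(\<lambda>N. (beta_map b ^^ N) z / b ^ N) \<longlonglongrightarrow> 0"
  proof (rule Lim_null_comparison)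
    show "\<forall>\<^sub>F N in sequentially. norm ((beta_map b ^^ N) z / b ^ N) \<le> (1/b) ^ N"
    proof (intro always_eventually allI)
      fix N
      have "0 \<le> (beta_map b ^^ N) z" "(beta_map b ^^ N) z < 1"
        using iter_ge0[OF z(1)] iter_lt1[OF z(2)] by auto
      then show "norm ((beta_map b ^^ N) z / b ^ N) \<le> (1/b) ^ N"
        using b1 by (simp add: power_divide divide_right_mono)
    qed
    show "(\<lambda>N. (1/b) ^ N) \<longlonglongrightarrow> 0" using b1 by (intro LIMSEQ_power_zero) auto
  qed
  have "(\<lambda>N. z - (beta_map b ^^ N) z / b ^ N) \<longlonglongrightarrow> z - 0"
    by (intro tendsto_diff tendsto_const lim0)
  then show ?thesis unfolding sums_def partial_exp by simp
qed

lemma ff_shift: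
  "ff x (Suc n) = ff (beta_map b x) n / b
     + (1 - cc * of_int (dig b x)) * (of_int (dig b ((beta_map b ^^ n) (beta_map b x))) / b ^ Suc n) / b"
  unfolding ff_def Dsum_Suc_shift funpow_Suc' using b1
  by (simp add: field_simps)

lemma G_fun:
  assumes x: "0 \<le> x" "x < 1"
  shows "takagi_G b x = (of_int (dig b x) + takagi_G b (beta_map b x)
            + (1 - cc * of_int (dig b x)) * beta_map b x) / b"
proof -
  let ?z = "beta_map b x"
  let ?d = "of_int (dig b x) :: real"
  have z: "0 \<le> ?z" "?z < 1" using bm_ge0 bm_lt1 by auto
  have s1: "ff ?z sums takagi_G b ?z"
    using G_eq[OF z] summable_sums[OF ff_summable[OF z]] by simp
  have s2: "(\<lambda>n. ff ?z n / b) sums (takagi_G b ?z / b)"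
    using sums_divide[OF s1] .
  have s3: "(\<lambda>n. (1 - cc * ?d) * (of_int (dig b ((beta_map b ^^ n) ?z)) / b ^ Suc n) / b)
              sums ((1 - cc * ?d) * ?z / b)"
    using sums_divide[OF sums_mult[OF exp_sums[OF z]], of "1 - cc * ?d" b] .
  have "(\<lambda>n. ff x (Suc n)) sums (takagi_G b ?z / b + (1 - cc * ?d) * ?z / b)"
    unfolding ff_shift using sums_add[OF s2 s3] .
  then have "ff x sums (takagi_G b ?z / b + (1 - cc * ?d) * ?z / b + ff x 0)"
    by (simp add: sums_Suc_iff)
  moreover have "ff x 0 = ?d / b" unfolding ff_def Dsum_def by simp
  moreover have "takagi_G b x = suminf (ff x)" using G_eq[OF x] .
  ultimately have "takagi_G b x = takagi_G b ?z / b + (1 - cc * ?d) * ?z / b + ?d / b"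
    using sums_unique by metis
  then show ?thesis using b1 by (simp add: add_divide_distrib)
qed

end

lemma alg:
  fixes b bN Gy' Gz Wz y' z Gu Gt d c :: real
  assumes "b \<noteq> 0" "bN \<noteq> 0" "Gy' - Gz = Wz * (y' - z) + (Gu - Gt) / bN"
  shows "(d + Gy' + (1 - c * d) * y') / b - (d + Gz + (1 - c * d) * z) / b
     = (Wz + 1 - c * d) * ((d + y') / b - (d + z) / b) + (Gu - Gt) / (b * bN)"
proof -
  have "(d + Gy' + (1 - c * d) * y') / b - (d + Gz + (1 - c * d) * z) / b
      = ((Gy' - Gz) + (1 - c * d) * (y' - z)) / b" using assms(1) by (simp add: field_simps)
  also have "\<dots> = (Wz * (y' - z) + (Gu - Gt) / bN + (1 - c * d) * (y' - z)) / b"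
    using assms(3) by simp
  also have "\<dots> = (Wz + 1 - c * d) * ((d + y') / b - (d + z) / b) + (Gu - Gt) / (b * bN)"
    using assms(1,2) by (simp add: field_simps)
  finally show ?thesis .
qed

context bx begin

lemma cyl:
  assumes "0 \<le> x" "x < 1" "0 \<le> u" "u \<le> (beta_map b ^^ N) x"
  shows "0 \<le> x - ((beta_map b ^^ N) x - u) / b ^ N
    \<and> x - ((beta_map b ^^ N) x - u) / b ^ N \<le> x
    \<and> (beta_map b ^^ N) (x - ((beta_map b ^^ N) x - u) / b ^ N) = u
    \<and> takagi_G b (x - ((beta_map b ^^ N) x - u) / b ^ N) - takagi_G b x
       = W x N * ((x - ((beta_map b ^^ N) x - u) / b ^ N) - x)
         + (takagi_G b u - takagi_G b ((beta_map b ^^ N) x)) / b ^ N"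
  using assms
proof (induction N arbitrary: x)
  case 0
  then show ?case by (simp add: W_def Dsum_def)
next
  case (Suc N)
  let ?z = "beta_map b x"
  let ?d = "of_int (dig b x) :: real"
  let ?G = "takagi_G b"
  have z: "0 \<le> ?z" "?z < 1" using bm_ge0 bm_lt1 by auto
  have u: "u \<le> (beta_map b ^^ N) ?z" using Suc.prems(4) by (simp only: funpow_Suc')
  define y' where "y' = ?z - ((beta_map b ^^ N) ?z - u) / b ^ N"
  have IH: "0 \<le> y'" "y' \<le> ?z" "(beta_map b ^^ N) y' = u"
      "?G y' - ?G ?z = W ?z N * (y' - ?z) + (?G u - ?G ((beta_map b ^^ N) ?z)) / b ^ N"
    using Suc.IH[OF z Suc.prems(3) u] unfolding y'_def by auto
  define y where "y = x - ((beta_map b ^^ Suc N) x - u) / b ^ Suc N"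
  have xz: "x = (?d + ?z) / b" using b1 by (simp add: bm_eq)
  have yy: "y = (?d + y') / b"
    unfolding y_def y'_def funpow_Suc' using b1
    by (subst (1) xz) (simp add: field_simps)
  have d0: "0 \<le> ?d" using dig_ge0[OF Suc.prems(1,2)] by simp
  have y'1: "y' < 1" using IH(2) z(2) by linarith
  have digy: "dig b y = dig b x"
    unfolding dig_def yy using b1 IH(1) y'1
    by (simp add: floor_eq_iff)
  have ty: "beta_map b y = y'"
    using digy b1 unfolding bm_eq yy by simp
  have y0: "0 \<le> y" unfolding yy using d0 IH(1) b1 by simp
  have "(?d + y') / b \<le> (?d + ?z) / b" using IH(2) b1 by (simp add: divide_right_mono)
  then have yx: "y \<le> x" unfolding yy using xz by simp
  have y1: "y < 1" using yx Suc.prems(2) by linarith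
  have Gy: "?G y = (?d + ?G y' + (1 - cc * ?d) * y') / b"
    using G_fun[OF y0 y1] ty digy by simp
  have Gx: "?G x = (?d + ?G ?z + (1 - cc * ?d) * ?z) / b"
    using G_fun[OF Suc.prems(1,2)] by simp
  have Wx: "W x (Suc N) = W ?z N + 1 - cc * ?d" by (rule W_Suc_shift)
  have yx': "y - x = (?d + y') / b - (?d + ?z) / b" using yy xz by linarith
  have "?G y - ?G x = W x (Suc N) * (y - x) + (?G u - ?G ((beta_map b ^^ N) ?z)) / (b * b ^ N)"
    unfolding Gy Gx Wx yx' using alg[OF _ _ IH(4), of b "?d" cc] b1 by simp
  then have "?G y - ?G x = W x (Suc N) * (y - x) + (?G u - ?G ((beta_map b ^^ Suc N) x)) / b ^ Suc N"
    by (simp only: funpow_Suc' power_Suc)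
  moreover have "(beta_map b ^^ Suc N) y = u" unfolding funpow_Suc' ty using IH(3) .
  ultimately show ?case using y0 yx unfolding y_def by simp
qed

end

lemma alg2:
  fixes bN bb A1 A2 X W y1 y2 x G0 G1 Gt :: real
  assumes "bN \<noteq> 0" "bb \<noteq> 0" "A1 - X = W * (y1 - x) + (G0 - Gt) / bN"
    "A2 - X = W * (y2 - x) + (G1 - Gt) / bN" "y1 - y2 = - (1/bb) / bN"
  shows "A1 - A2 = (- W / bb + G0 - G1) / bN"
proof -
  have "A1 - A2 = (A1 - X) - (A2 - X)" by simp
  also have "\<dots> = W * (y1 - y2) + (G0 - G1) / bN"
    unfolding assms(3,4) using assms(1) by (simp add: field_simps)
  also have "\<dots> = (- W / bb + G0 - G1) / bN"
    unfolding assms(5) using assms(1,2) by (simp add: field_simps)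
  finally show ?thesis .
qed

context bx begin

definition Lip :: "real \<Rightarrow> real \<Rightarrow> bool" where
  "Lip K x \<longleftrightarrow> (\<forall>y\<in>{0..1}. \<bar>takagi_G b y - takagi_G b x\<bar> \<le> K * \<bar>y - x\<bar>)"

definition B0 :: "real \<Rightarrow> real" where
  "B0 K = b * (2 * K + \<bar>takagi_G b 0 - takagi_G b (1/b)\<bar>)"

lemma Lip_W:
  assumes x: "0 \<le> x" "x < 1" and L: "Lip K x" and K0: "0 \<le> K" and t1: "1 \<le> b * (beta_map b ^^ N) x"
  shows "\<bar>W x N\<bar> \<le> B0 K"
proof -
  let ?t = "(beta_map b ^^ N) x"
  let ?G = "takagi_G b"
  have t: "0 \<le> ?t" "?t < 1" using iter_ge0[OF x(1)] iter_lt1[OF x(2)] by auto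
  have bN: "0 < b ^ N" using b1 by simp
  have ub: "1/b \<le> ?t" using t1 b1 by (simp add: divide_le_eq mult.commute)
  have ub0: "0 \<le> 1/b" using b1 by simp
  define y1 where "y1 = x - (?t - 0) / b ^ N"
  define y2 where "y2 = x - (?t - 1/b) / b ^ N"
  have c1: "0 \<le> y1" "y1 \<le> x" "?G y1 - ?G x = W x N * (y1 - x) + (?G 0 - ?G ?t) / b ^ N"
    using cyl[OF x order_refl t(1)] unfolding y1_def by auto
  have c2: "0 \<le> y2" "y2 \<le> x" "?G y2 - ?G x = W x N * (y2 - x) + (?G (1/b) - ?G ?t) / b ^ N"
    using cyl[OF x ub0 ub] unfolding y2_def by auto
  have "y1 \<in> {0..1}" using c1 x by auto
  then have l1: "\<bar>?G y1 - ?G x\<bar> \<le> K * \<bar>y1 - x\<bar>" using L unfolding Lip_def by blast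
  have "y2 \<in> {0..1}" using c2 x by auto
  then have l2: "\<bar>?G y2 - ?G x\<bar> \<le> K * \<bar>y2 - x\<bar>" using L unfolding Lip_def by blast
  have d1: "\<bar>y1 - x\<bar> \<le> 1 / b ^ N" unfolding y1_def using t bN by (simp add: divide_right_mono)
  have e2: "\<bar>y2 - x\<bar> = (?t - 1/b) / b ^ N" unfolding y2_def using ub bN by simp
  have "?t - 1/b \<le> 1" using t ub0 by linarith
  then have d2: "\<bar>y2 - x\<bar> \<le> 1 / b ^ N" unfolding e2 using bN
    by (simp add: divide_right_mono)
  have "\<bar>?G y1 - ?G y2\<bar> \<le> K * \<bar>y1 - x\<bar> + K * \<bar>y2 - x\<bar>" using l1 l2 by linarith
  also have "\<dots> \<le> K * (1 / b ^ N) + K * (1 / b ^ N)"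
    using d1 d2 K0 by (intro add_mono mult_left_mono) auto
  finally have A: "\<bar>?G y1 - ?G y2\<bar> \<le> 2 * K / b ^ N" by simp
  have dy: "y1 - y2 = - (1/b) / b ^ N" unfolding y1_def y2_def using bN b1 by (simp add: field_simps)
  have "?G y1 - ?G y2 = (- W x N / b + ?G 0 - ?G (1/b)) / b ^ N"
    using alg2[OF _ _ c1(3) c2(3) dy] b1 bN by simp
  then have "\<bar>- W x N / b + ?G 0 - ?G (1/b)\<bar> / b ^ N \<le> 2 * K / b ^ N"
    using A bN by simp
  then have "\<bar>- W x N / b + ?G 0 - ?G (1/b)\<bar> \<le> 2 * K"
    using bN by (simp add: divide_le_cancel)
  then have "\<bar>W x N / b\<bar> \<le> 2 * K + \<bar>?G 0 - ?G (1/b)\<bar>" by linarith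
  then have "\<bar>W x N\<bar> / b \<le> 2 * K + \<bar>?G 0 - ?G (1/b)\<bar>" using b1 by simp
  then show ?thesis unfolding B0_def using b1 by (simp add: divide_le_eq mult.commute)
qed


lemma B0_nonneg: "0 \<le> K \<Longrightarrow> 0 \<le> B0 K"
  unfolding B0_def using b1 by simp

lemma Lip_Wlow:
  assumes x: "0 \<le> x" "x < 1" and L: "Lip K x" and K0: "0 \<le> K"
  shows "- (B0 K + \<bar>1 - cc\<bar>) \<le> W x n"
proof (induction n)
  case 0
  have "0 \<le> B0 K" using B0_nonneg K0 by simp
  then show ?case by (simp add: W_def Dsum_def)
next
  case (Suc n)
  let ?t = "(beta_map b ^^ n) x"
  have t: "0 \<le> ?t" "?t < 1" using iter_ge0[OF x(1)] iter_lt1[OF x(2)] by auto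
  show ?case
  proof (cases "1 \<le> b * ?t")
    case True
    then have "dig b ?t = 1" using dig1 t by simp
    then show ?thesis using Lip_W[OF x L K0 True] unfolding W_Suc by simp
  next
    case False
    then have "dig b ?t = 0" using dig0 t by simp
    then show ?thesis using Suc.IH unfolding W_Suc by simp
  qed
qed

lemma zero_run:
  assumes x: "0 \<le> x" "x < 1"
  shows "(1/b) ^ Suc j \<le> (beta_map b ^^ m) x \<Longrightarrow>
    \<exists>p\<ge>m. 1 \<le> b * (beta_map b ^^ p) x \<and> W x p = W x m + real (p - m)
       \<and> (beta_map b ^^ p) x = b ^ (p - m) * (beta_map b ^^ m) x"
proof (induction j arbitrary: m)
  case 0
  then have "1 \<le> b * (beta_map b ^^ m) x" using b1 by (simp add: divide_le_eq mult.commute)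
  then show ?case by auto
next
  case (Suc j)
  let ?t = "(beta_map b ^^ m) x"
  have t: "0 \<le> ?t" "?t < 1" using iter_ge0[OF x(1)] iter_lt1[OF x(2)] by auto
  show ?case
  proof (cases "1 \<le> b * ?t")
    case True then show ?thesis by auto
  next
    case False
    then have d: "dig b ?t = 0" using dig0 t by simp
    then have tS: "(beta_map b ^^ Suc m) x = b * ?t" by (simp add: bm_eq)
    have "(1/b) ^ Suc j \<le> (beta_map b ^^ Suc m) x"
      unfolding tS using Suc.prems b1 mult_left_mono[OF Suc.prems, of b]
      by (simp add: power_divide)
    from Suc.IH[OF this] obtain p where p: "p \<ge> Suc m" "1 \<le> b * (beta_map b ^^ p) x"
      "W x p = W x (Suc m) + real (p - Suc m)"
      "(beta_map b ^^ p) x = b ^ (p - Suc m) * (beta_map b ^^ Suc m) x" by blast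
    have "W x (Suc m) = W x m + 1" unfolding W_Suc d by simp
    moreover have "b ^ (p - Suc m) * (b * ?t) = b ^ (p - m) * ?t"
      using p(1) by (simp add: power_Suc2[symmetric] Suc_diff_Suc mult.assoc[symmetric] del: power_Suc2)
    ultimately show ?thesis using p tS by (intro exI[of _ p]) auto
  qed
qed

lemma Lip_orbit:
  assumes x: "0 \<le> x" "x < 1" and L: "Lip K x" and K0: "0 \<le> K" and LL: "B0 K + (B0 K + \<bar>1 - cc\<bar>) < real LN"
  shows "(beta_map b ^^ n) x = 0 \<or> (1/b) ^ LN \<le> (beta_map b ^^ n) x"
proof (rule ccontr)
  let ?t = "(beta_map b ^^ n) x"
  assume "\<not> ?thesis"
  then have t0: "0 < ?t" and tL: "?t < (1/b) ^ LN" using iter_ge0[OF x(1)] by (auto simp: less_le)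
  obtain k where k: "(1/b) ^ k < ?t" using real_arch_pow_inv[OF t0, of "1/b"] b1 by auto
  have "k \<noteq> 0" using k iter_lt1[OF x(2)] by (metis less_asym power_0)
  then obtain j where kj: "k = Suc j" by (cases k) auto
  from zero_run[OF x, of j n] k kj obtain p where p: "p \<ge> n" "1 \<le> b * (beta_map b ^^ p) x"
     "W x p = W x n + real (p - n)" "(beta_map b ^^ p) x = b ^ (p - n) * ?t" by auto
  have "1 \<le> b * (b ^ (p - n) * ?t)" using p(2) p(4) by simp
  also have "\<dots> < b * (b ^ (p - n) * (1/b) ^ LN)" using tL b1 by simp
  also have "\<dots> = b ^ Suc (p - n) / b ^ LN" by (simp add: power_divide)
  finally have "b ^ LN < b ^ Suc (p - n)" using b1 by simp
  then have "LN < Suc (p - n)" using power_less_imp_less_exp b1 by blast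
  then have pn: "real LN \<le> real (p - n)" by simp
  have "\<bar>W x p\<bar> \<le> B0 K" using Lip_W[OF x L K0 p(2)] .
  moreover have "- (B0 K + \<bar>1 - cc\<bar>) \<le> W x n" using Lip_Wlow[OF x L K0] .
  ultimately show False using p(3) pn LL by linarith
qed

end


primrec word :: "real \<Rightarrow> nat \<Rightarrow> real \<Rightarrow> int list" where
  "word b 0 x = []"
| "word b (Suc n) x = dig b x # word b n (beta_map b x)"

definition Eset :: "real \<Rightarrow> nat \<Rightarrow> int list set \<Rightarrow> real \<Rightarrow> real \<Rightarrow> real set" where
  "Eset b N S r \<delta> = {x. 0 \<le> x \<and> x < r \<and> word b N x \<in> S \<and> (beta_map b ^^ N) x < \<delta>}"

lemma fin_lborel: "A \<subseteq> {0..1} \<Longrightarrow> emeasure lborel (A::real set) \<noteq> \<infinity>"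
proof -
  assume "A \<subseteq> {0..1}"
  then have "emeasure lborel A \<le> emeasure lborel {0..1::real}" by (rule emeasure_mono) simp
  then show ?thesis by (auto simp: top_unique)
qed

lemma Eset_sub: "r \<le> 1 \<Longrightarrow> Eset b N S r \<delta> \<subseteq> {0..1}"
  unfolding Eset_def by auto

context bx begin

lemma Eset_Suc:
  assumes r: "r \<le> 1"
  shows "Eset b (Suc N) S r \<delta> =
    (\<lambda>x. 0 + b * x) -` Eset b N {w. 0 # w \<in> S} (min 1 (b * r)) \<delta>
    \<union> (\<lambda>x. -1 + b * x) -` Eset b N {w. 1 # w \<in> S} (min (b - 1) (b * r - 1)) \<delta>"
proof (intro set_eqI)
  fix x
  have mem: "x \<in> Eset b (Suc N) S r \<delta> \<longleftrightarrow>
     0 \<le> x \<and> x < r \<and> dig b x # word b N (beta_map b x) \<in> S \<and> (beta_map b ^^ N) (beta_map b x) < \<delta>"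
    unfolding Eset_def by (simp add: funpow_Suc' del: funpow.simps)
  have br: "x < r \<longleftrightarrow> b * x < b * r" using b1 by simp
  show "x \<in> Eset b (Suc N) S r \<delta> \<longleftrightarrow> x \<in> (\<lambda>x. 0 + b * x) -` Eset b N {w. 0 # w \<in> S} (min 1 (b * r)) \<delta>
    \<union> (\<lambda>x. -1 + b * x) -` Eset b N {w. 1 # w \<in> S} (min (b - 1) (b * r - 1)) \<delta>"
  proof (cases "0 \<le> x")
    case False
    then have "b * x < 0" using b1 by (simp add: mult_pos_neg)
    then show ?thesis using False unfolding mem Eset_def by auto
  next
    case x0: True
    show ?thesis
    proof (cases "b * x < 1")
      case True
      have d: "dig b x = 0" using dig0[OF x0 True] .
      have t: "beta_map b x = b * x" using d by (simp add: bm_eq)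
      have rr: "x < r \<longleftrightarrow> b * x < min 1 (b * r)" using br True by auto
      have L: "x \<in> Eset b (Suc N) S r \<delta> \<longleftrightarrow> 0 \<le> x \<and> x < r \<and> 0 # word b N (b * x) \<in> S \<and> (beta_map b ^^ N) (b * x) < \<delta>"
        using mem unfolding d t by simp
      have R: "x \<in> (\<lambda>x. 0 + b * x) -` Eset b N {w. 0 # w \<in> S} (min 1 (b * r)) \<delta>
         \<union> (\<lambda>x. -1 + b * x) -` Eset b N {w. 1 # w \<in> S} (min (b - 1) (b * r - 1)) \<delta> \<longleftrightarrow>
         0 \<le> b * x \<and> b * x < min 1 (b * r) \<and> 0 # word b N (b * x) \<in> S \<and> (beta_map b ^^ N) (b * x) < \<delta>"
        unfolding Eset_def using True by auto
      show ?thesis unfolding L R using rr x0 b1 by auto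
    next
      case False
      show ?thesis
      proof (cases "x < 1")
        case x1: True
        have d: "dig b x = 1" using dig1[OF x1] False by simp
        have t: "beta_map b x = -1 + b * x" using d by (simp add: bm_eq)
        have rr: "x < r \<longleftrightarrow> -1 + b * x < min (b - 1) (b * r - 1)" using br x1 b1 by auto
        have L: "x \<in> Eset b (Suc N) S r \<delta> \<longleftrightarrow> 0 \<le> x \<and> x < r \<and> 1 # word b N (-1 + b * x) \<in> S \<and> (beta_map b ^^ N) (-1 + b * x) < \<delta>"
          using mem unfolding d t by simp
        have R: "x \<in> (\<lambda>x. 0 + b * x) -` Eset b N {w. 0 # w \<in> S} (min 1 (b * r)) \<delta>
           \<union> (\<lambda>x. -1 + b * x) -` Eset b N {w. 1 # w \<in> S} (min (b - 1) (b * r - 1)) \<delta> \<longleftrightarrow>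
           0 \<le> -1 + b * x \<and> -1 + b * x < min (b - 1) (b * r - 1) \<and> 1 # word b N (-1 + b * x) \<in> S \<and> (beta_map b ^^ N) (-1 + b * x) < \<delta>"
          unfolding Eset_def using False by auto
        show ?thesis unfolding L R using rr x0 False b1 by auto
      next
        case x1: False
        have "\<not> (-1 + b * x < b - 1)" using x1 b1 by simp
        then show ?thesis using False x1 r unfolding mem Eset_def by auto
      qed
    qed
  qed
qed

lemma meas_pre:
  assumes "A \<in> sets borel"
  shows "(\<lambda>x. t + b * x) -` A \<in> sets borel"
proof -
  have "(\<lambda>x::real. t + b * x) \<in> borel_measurable borel" by measurable
  from measurable_sets[OF this assms] show ?thesis by simp
qed

lemma D:
  assumes "r \<le> 1" "0 < \<delta>" "\<delta> \<le> 1"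
  shows "Eset b N S r \<delta> \<in> sets borel \<and> \<delta> * measure lborel (Eset b N S r 1) \<le> measure lborel (Eset b N S r \<delta>)"
  using assms
proof (induction N arbitrary: S r \<delta>)
  case 0
  show ?case
  proof (cases "[] \<in> S")
    case False
    then show ?thesis unfolding Eset_def by simp
  next
    case True
    have e: "Eset b 0 S r d = {0..<min r d}" for d unfolding Eset_def using True by auto
    show ?thesis
    proof (cases "0 \<le> r")
      case r0: True
      have "\<delta> * r \<le> min r \<delta>"
        using r0 0 mult_left_le[of \<delta> r] mult_left_le_one_le[of r \<delta>] by (auto simp: mult.commute)
      then show ?thesis unfolding e using r0 0 by simp
    next
      case False
      then show ?thesis unfolding e by simp
    qed
  qed
next
  case (Suc N)
  define r0 where "r0 = min 1 (b * r)"
  define r1 where "r1 = min (b - 1) (b * r - 1)"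
  have r0: "r0 \<le> 1" and r1: "r1 \<le> 1" unfolding r0_def r1_def using b2 by auto
  let ?S0 = "{w. 0 # w \<in> S}" and ?S1 = "{w. 1 # w \<in> S}"
  have key: "Eset b (Suc N) S r d \<in> sets borel \<and>
      measure lborel (Eset b (Suc N) S r d) = (measure lborel (Eset b N ?S0 r0 d) + measure lborel (Eset b N ?S1 r1 d)) / b"
    if d: "0 < d" "d \<le> 1" for d
  proof -
    have E0: "Eset b N ?S0 r0 d \<in> sets borel" using Suc.IH[OF r0 d] by blast
    have E1: "Eset b N ?S1 r1 d \<in> sets borel" using Suc.IH[OF r1 d] by blast
    let ?P0 = "(\<lambda>x. 0 + b * x) -` Eset b N ?S0 r0 d"
    let ?P1 = "(\<lambda>x. -1 + b * x) -` Eset b N ?S1 r1 d"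
    have eq: "Eset b (Suc N) S r d = ?P0 \<union> ?P1" using Eset_Suc[OF Suc.prems(1)] unfolding r0_def r1_def .
    have P0: "?P0 \<in> sets borel" using meas_pre[OF E0] .
    have P1: "?P1 \<in> sets borel" using meas_pre[OF E1] .
    have sub: "?P0 \<union> ?P1 \<subseteq> {0..1}" using Eset_sub[OF Suc.prems(1)] eq by blast
    have disj: "?P0 \<inter> ?P1 = {}" unfolding Eset_def r0_def by auto
    have "measure lborel (?P0 \<union> ?P1) = measure lborel ?P0 + measure lborel ?P1"
      using sub P0 P1 disj by (intro measure_Union fin_lborel) auto
    also have "\<dots> = measure lborel (Eset b N ?S0 r0 d) / b + measure lborel (Eset b N ?S1 r1 d) / b"
      using affine_pre_measure[OF E0, of b 0] affine_pre_measure[OF E1, of b "-1"] b1 by simp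
    finally show ?thesis unfolding eq using P0 P1 by (simp add: add_divide_distrib)
  qed
  have i0: "d * measure lborel (Eset b N ?S0 r0 1) \<le> measure lborel (Eset b N ?S0 r0 d)"
    if "0 < d" "d \<le> 1" for d using Suc.IH[OF r0 that] by blast
  have i1: "d * measure lborel (Eset b N ?S1 r1 1) \<le> measure lborel (Eset b N ?S1 r1 d)"
    if "0 < d" "d \<le> 1" for d using Suc.IH[OF r1 that] by blast
  have k1: "measure lborel (Eset b (Suc N) S r 1) = (measure lborel (Eset b N ?S0 r0 1) + measure lborel (Eset b N ?S1 r1 1)) / b"
    using key[of 1] by simp
  have kd: "measure lborel (Eset b (Suc N) S r \<delta>) = (measure lborel (Eset b N ?S0 r0 \<delta>) + measure lborel (Eset b N ?S1 r1 \<delta>)) / b"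
    using key[OF Suc.prems(2,3)] by simp
  have "\<delta> * (measure lborel (Eset b N ?S0 r0 1) + measure lborel (Eset b N ?S1 r1 1))
      \<le> measure lborel (Eset b N ?S0 r0 \<delta>) + measure lborel (Eset b N ?S1 r1 \<delta>)"
    using i0[OF Suc.prems(2,3)] i1[OF Suc.prems(2,3)] by (simp add: distrib_left)
  then have "\<delta> * (measure lborel (Eset b N ?S0 r0 1) + measure lborel (Eset b N ?S1 r1 1)) / b
      \<le> (measure lborel (Eset b N ?S0 r0 \<delta>) + measure lborel (Eset b N ?S1 r1 \<delta>)) / b"
    using b1 by (simp add: divide_right_mono)
  then show ?case unfolding k1 kd using key[OF Suc.prems(2,3)] by simp
qed

end


lemma word_nth: "i < N \<Longrightarrow> word b N x ! i = dig b ((beta_map b ^^ i) x)"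
proof (induction N arbitrary: x i)
  case 0 then show ?case by simp
next
  case (Suc N)
  show ?case
  proof (cases i)
    case 0 then show ?thesis by simp
  next
    case (Suc i')
    then have "i' < N" using Suc.prems by simp
    then show ?thesis using Suc.IH[of i' "beta_map b x"] \<open>i = Suc i'\<close>
      by (simp add: funpow_Suc' del: funpow.simps)
  qed
qed

context bx begin

lemma zero_block:
  "0 \<le> t \<Longrightarrow> t < 1 \<Longrightarrow> (t < (1/b) ^ L \<longleftrightarrow> (\<forall>i<L. dig b ((beta_map b ^^ i) t) = 0))"
proof (induction L arbitrary: t)
  case 0 then show ?case by simp
next
  case (Suc L)
  have split: "(\<forall>i<Suc L. dig b ((beta_map b ^^ i) t) = 0) \<longleftrightarrow>
      dig b t = 0 \<and> (\<forall>i<L. dig b ((beta_map b ^^ i) (beta_map b t)) = 0)"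
  proof
    assume a: "\<forall>i<Suc L. dig b ((beta_map b ^^ i) t) = 0"
    have "dig b ((beta_map b ^^ 0) t) = 0" using a by blast
    moreover have "dig b ((beta_map b ^^ i) (beta_map b t)) = 0" if "i < L" for i
      using a[rule_format, of "Suc i"] that by (simp add: funpow_Suc' del: funpow.simps)
    ultimately show "dig b t = 0 \<and> (\<forall>i<L. dig b ((beta_map b ^^ i) (beta_map b t)) = 0)" by simp
  next
    assume a: "dig b t = 0 \<and> (\<forall>i<L. dig b ((beta_map b ^^ i) (beta_map b t)) = 0)"
    show "\<forall>i<Suc L. dig b ((beta_map b ^^ i) t) = 0"
    proof (intro allI impI)
      fix i assume "i < Suc L"
      then show "dig b ((beta_map b ^^ i) t) = 0"
        using a by (cases i) (auto simp: funpow_Suc' simp del: funpow.simps)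
    qed
  qed
  show ?case
  proof (cases "b * t < 1")
    case True
    have d: "dig b t = 0" using dig0[OF Suc.prems(1) True] .
    have tt: "beta_map b t = b * t" using d by (simp add: bm_eq)
    have "t < (1/b) ^ Suc L \<longleftrightarrow> b * t < (1/b) ^ L"
      using b1 by (simp add: field_simps power_divide)
    then show ?thesis unfolding split d tt using Suc.IH[of "b * t"] True Suc.prems b1 by simp
  next
    case False
    have d: "dig b t = 1" using dig1[OF Suc.prems(2)] False by simp
    have "(1/b) ^ Suc L = (1/b) * (1/b) ^ L" by simp
    also have "\<dots> \<le> (1/b) * 1" using b1 by (intro mult_left_mono power_le_one) auto
    finally have "(1/b) ^ Suc L \<le> 1/b" by simp
    moreover have "1/b \<le> t" using False b1 by (simp add: divide_le_eq mult.commute)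
    ultimately show ?thesis unfolding split d by simp
  qed
qed

definition Ak :: "nat \<Rightarrow> nat \<Rightarrow> real set" where
  "Ak L k = {x. 0 \<le> x \<and> x < 1 \<and> (\<forall>j<k. (1/b) ^ L \<le> (beta_map b ^^ (j * L)) x)}"

definition Sk :: "nat \<Rightarrow> nat \<Rightarrow> int list set" where
  "Sk L k = {w. \<forall>j<k. \<exists>i<L. w ! (j * L + i) \<noteq> 0}"

lemma Ak_eq: "Ak L k = Eset b (k * L) (Sk L k) 1 1"
proof -
  have blk: "((1/b) ^ L \<le> (beta_map b ^^ (j * L)) x) \<longleftrightarrow> (\<exists>i<L. word b (k * L) x ! (j * L + i) \<noteq> 0)"
    if x: "0 \<le> x" "x < 1" and j: "j < k" for x j
  proof -
    have t: "0 \<le> (beta_map b ^^ (j * L)) x" "(beta_map b ^^ (j * L)) x < 1"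
      using iter_ge0[OF x(1)] iter_lt1[OF x(2)] by auto
    have idx: "j * L + i < k * L" if "i < L" for i
    proof -
      have "j * L + i < j * L + L" using that by simp
      also have "\<dots> = Suc j * L" by simp
      also have "\<dots> \<le> k * L" using j by (intro mult_right_mono) auto
      finally show ?thesis .
    qed
    have w: "word b (k * L) x ! (j * L + i) = dig b ((beta_map b ^^ i) ((beta_map b ^^ (j * L)) x))"
      if "i < L" for i
      using word_nth[OF idx[OF that], of b x] by (simp add: funpow_add add.commute)
    have zb: "\<not> ((beta_map b ^^ (j * L)) x < (1/b) ^ L) \<longleftrightarrow>
        \<not> (\<forall>i<L. dig b ((beta_map b ^^ i) ((beta_map b ^^ (j * L)) x)) = 0)"
      using zero_block[OF t, of L] by simp
    have "(\<exists>i<L. word b (k * L) x ! (j * L + i) \<noteq> 0) \<longleftrightarrow>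
        (\<exists>i<L. dig b ((beta_map b ^^ i) ((beta_map b ^^ (j * L)) x)) \<noteq> 0)"
      using w by auto
    then show ?thesis using zb by (simp add: not_less)
  qed
  show ?thesis
  proof (intro set_eqI iffI)
  fix x
  assume "x \<in> Ak L k"
  then show "x \<in> Eset b (k * L) (Sk L k) 1 1"
    unfolding Ak_def Eset_def Sk_def using blk iter_lt1 by auto
next
  fix x
  assume "x \<in> Eset b (k * L) (Sk L k) 1 1"
  then show "x \<in> Ak L k"
    unfolding Ak_def Eset_def Sk_def using blk by auto
  qed
qed

lemma Ak_Suc: "Ak L (Suc k) = Ak L k - Eset b (k * L) (Sk L k) 1 ((1/b) ^ L)"
proof -
  have "Eset b (k * L) (Sk L k) 1 ((1/b) ^ L) = {x \<in> Ak L k. (beta_map b ^^ (k * L)) x < (1/b) ^ L}"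
    unfolding Ak_eq Eset_def by (auto simp: iter_lt1)
  then show ?thesis unfolding Ak_def by (auto simp: less_Suc_eq not_less)
qed

lemma Ak_meas: "Ak L k \<in> sets borel \<and> measure lborel (Ak L k) \<le> (1 - (1/b) ^ L) ^ k"
proof (induction k)
  case 0
  have "Ak L 0 = {0..<1}" unfolding Ak_def by auto
  then show ?case by simp
next
  case (Suc k)
  let ?q = "(1/b) ^ L"
  have q: "0 < ?q" "?q \<le> 1" using b1 by (auto simp: power_le_one)
  let ?E = "Eset b (k * L) (Sk L k) 1 ?q"
  have Dk: "?E \<in> sets borel" "?q * measure lborel (Ak L k) \<le> measure lborel ?E"
    using D[of 1 ?q "k * L" "Sk L k"] q unfolding Ak_eq by auto
  have sub: "?E \<subseteq> Ak L k" unfolding Ak_Suc Ak_eq Eset_def by (auto simp: iter_lt1)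
  have fin: "emeasure lborel (Ak L k) \<noteq> \<infinity>" by (rule fin_lborel) (auto simp: Ak_def)
  have "measure lborel (Ak L (Suc k)) = measure lborel (Ak L k) - measure lborel ?E"
    unfolding Ak_Suc using Suc.IH Dk(1) sub fin by (intro measure_Diff) auto
  also have "\<dots> \<le> (1 - ?q) * measure lborel (Ak L k)" using Dk(2) by (simp add: algebra_simps)
  also have "\<dots> \<le> (1 - ?q) * (1 - ?q) ^ k" using Suc.IH q by (intro mult_left_mono) auto
  finally have "measure lborel (Ak L (Suc k)) \<le> (1 - ?q) ^ Suc k" by simp
  moreover have "Ak L (Suc k) \<in> sets borel" unfolding Ak_Suc using Suc.IH Dk(1) by auto
  ultimately show ?case by simp
qed

definition Fset :: "nat \<Rightarrow> real set" where "Fset L = (\<Inter>k. Ak L k)"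

lemma Fset_null: "Fset L \<in> null_sets lborel"
proof -
  let ?q = "(1/b) ^ L"
  have q: "0 < ?q" "?q \<le> 1" using b1 by (auto simp: power_le_one)
  have Fm: "Fset L \<in> sets borel" unfolding Fset_def
    using Ak_meas by (intro sets.countable_INT) auto
  have fin: "emeasure lborel (Fset L) \<noteq> \<infinity>"
    by (rule fin_lborel) (auto simp: Fset_def Ak_def)
  have le: "measure lborel (Fset L) \<le> (1 - ?q) ^ k" for k
  proof -
    have "measure lborel (Fset L) \<le> measure lborel (Ak L k)"
    proof (rule measure_mono_fmeasurable)
      show "Fset L \<subseteq> Ak L k" unfolding Fset_def by auto
      show "Fset L \<in> sets lborel" using Fm by simp
      have sub: "Ak L k \<subseteq> {0..1}" unfolding Ak_def by auto
      show "Ak L k \<in> fmeasurable lborel"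
      proof (rule fmeasurableI)
        show "Ak L k \<in> sets lborel" using Ak_meas[of L k] by simp
        show "emeasure lborel (Ak L k) < \<infinity>" using fin_lborel[OF sub] by (simp add: less_top)
      qed
    qed
    then show ?thesis using Ak_meas[of L k] by linarith
  qed
  have "(\<lambda>k. (1 - ?q) ^ k) \<longlonglongrightarrow> 0" using q by (intro LIMSEQ_power_zero) auto
  then have "measure lborel (Fset L) \<le> 0" using le by (intro LIMSEQ_le_const) auto
  then have "measure lborel (Fset L) = 0" by (simp add: antisym)
  then have "emeasure lborel (Fset L) = 0" using emeasure_eq_ennreal_measure[of lborel "Fset L"] fin by simp
  then show ?thesis using Fm by auto
qed

definition Zset :: "nat \<Rightarrow> real set" where
  "Zset n = {x. 0 \<le> x \<and> x < 1 \<and> (beta_map b ^^ n) x = 0}"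

lemma Zset_finite: "finite (Zset n)"
proof (induction n)
  case 0
  have "Zset 0 \<subseteq> {0}" unfolding Zset_def by auto
  then show ?case using finite_subset by blast
next
  case (Suc n)
  have "Zset (Suc n) \<subseteq> (\<lambda>z. z / b) ` Zset n \<union> (\<lambda>z. (1 + z) / b) ` Zset n"
  proof
    fix x assume x: "x \<in> Zset (Suc n)"
    then have x01: "0 \<le> x" "x < 1" unfolding Zset_def by auto
    have z: "beta_map b x \<in> Zset n" using x bm_ge0 bm_lt1 unfolding Zset_def
      by (simp add: funpow_Suc' del: funpow.simps)
    from dig01[OF x01] show "x \<in> (\<lambda>z. z / b) ` Zset n \<union> (\<lambda>z. (1 + z) / b) ` Zset n"
    proof
      assume a: "dig b x = 0"
      have "x = beta_map b x / b" using b1 by (simp add: bm_eq a)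
      then show ?thesis using z by blast
    next
      assume a: "dig b x = 1"
      have "x = (1 + beta_map b x) / b" using b1 by (simp add: bm_eq a)
      then show ?thesis using z by blast
    qed
  qed
  then show ?case using Suc.IH finite_subset by blast
qed

end

theorem theorem4p1:
  fixes \<beta> :: real
  assumes "1 < \<beta>" and "\<beta> \<le> 2"
  shows "AE x in lborel. x \<in> {0..1} \<longrightarrow>
           \<not> (\<exists>K>0. \<forall>y\<in>{0..1}.
                  \<bar>takagi_G \<beta> y - takagi_G \<beta> x\<bar> \<le> K * \<bar>y - x\<bar>)"
proof -
  interpret bx \<beta> using assms by unfold_locales
  define Nul where "Nul = {1} \<union> (\<Union>n. Zset n) \<union> (\<Union>L. Fset L)"
  have null: "Nul \<in> null_sets lborel"
  proof -
    have "(\<Union>n. Zset n) \<in> null_sets lborel"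
      using Zset_finite by (intro null_sets_UN finite_imp_null_set_lborel)
    moreover have "(\<Union>L. Fset L) \<in> null_sets lborel"
      using Fset_null by (intro null_sets_UN)
    moreover have "{1::real} \<in> null_sets lborel" by (intro finite_imp_null_set_lborel) simp
    ultimately show ?thesis unfolding Nul_def by (intro null_sets.Un)
  qed
  show ?thesis
  proof (rule AE_I'[OF null], intro subsetI)
    fix x assume "x \<in> {x \<in> space lborel. \<not> (x \<in> {0..1} \<longrightarrow>
           \<not> (\<exists>K>0. \<forall>y\<in>{0..1}. \<bar>takagi_G \<beta> y - takagi_G \<beta> x\<bar> \<le> K * \<bar>y - x\<bar>))}"
    then have x: "x \<in> {0..1}" and
      "\<exists>K>0. \<forall>y\<in>{0..1}. \<bar>takagi_G \<beta> y - takagi_G \<beta> x\<bar> \<le> K * \<bar>y - x\<bar>" by auto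
    then obtain K where K: "0 < K"
      and L0: "\<forall>y\<in>{0..1}. \<bar>takagi_G \<beta> y - takagi_G \<beta> x\<bar> \<le> K * \<bar>y - x\<bar>" by blast
    have L: "Lip K x" unfolding Lip_def using L0 .
    show "x \<in> Nul"
    proof (cases "x = 1")
      case True then show ?thesis unfolding Nul_def by simp
    next
      case False
      then have x01: "0 \<le> x" "x < 1" using x by auto
      define LN where "LN = nat \<lceil>2 * B0 K + \<bar>1 - cc\<bar>\<rceil> + 1"
      have LL: "B0 K + (B0 K + \<bar>1 - cc\<bar>) < real LN" unfolding LN_def by linarith
      have orb: "(beta_map \<beta> ^^ n) x = 0 \<or> (1/\<beta>) ^ LN \<le> (beta_map \<beta> ^^ n) x" for n
        using Lip_orbit[OF x01 L _ LL] K by simp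
      show ?thesis
      proof (cases "\<exists>n. (beta_map \<beta> ^^ n) x = 0")
        case True
        then obtain n where "(beta_map \<beta> ^^ n) x = 0" by blast
        then have "x \<in> Zset n" unfolding Zset_def using x01 by simp
        then show ?thesis unfolding Nul_def by blast
      next
        case False
        then have "x \<in> Ak LN k" for k unfolding Ak_def using orb x01 by auto
        then have "x \<in> Fset LN" unfolding Fset_def by blast
        then show ?thesis unfolding Nul_def by blast
      qed
    qed
  qed
qed


end
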